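(* Let $\varphi(x)=a_nx^n+\cdots+a_1x+a_0\in\mathbb{C}[x]$ with $a_n\neq0$ have $n$ distinct roots $x_1,\dots,x_n$, and let $h(x)\in R$. Let $h_*(x)=c_{n-1}x^{n-1}+\cdots+c_1x+c_0$ be the unique polynomial of degree less than $n$ in the coset $\overline{h(x)}\in R/(\varphi(x))$, and let $r(x)=b_{n-1}x^{n-1}+\cdots+b_1x+b_0$ be the unique polynomial of degree less than $n$ in the coset $\overline{\varphi'(x)h(x)}\in R/(\varphi(x))$. Define numbers $b_{j,k}$ ($j=-1,0,\dots,n-1$, $k=0,\dots,n-1$) by $b_{-1,k}=0$, $$b_{n-i,0}=(n-(i-1))\,a_{n-(i-1)},\qquad i=1,\dots,n,$$ $$b_{n-i,k}=-\frac{a_{n-i}}{a_n}\,b_{n-1,k-1}+b_{n-(i+1),k-1},\qquad i=1,\dots,n,\ k=1,\dots,n-1.$$ Then $$b_{n-i}=c_{n-1}b_{n-i,n-1}+\cdots+c_1b_{n-i,1}+c_0b_{n-i,0},\qquad i=1,\dots,n.$$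
   Context: $R\subset\mathbb{C}(x)$ denotes the subring of rational functions $p(x)/q(x)$ with $p,q\in\mathbb{C}[x]$ and $q(x_i)\neq0$ for every root $x_i$ of $\varphi$. $(\varphi(x))$ is the ideal of $R$ generated by $\varphi$, and cosets in $R/(\varphi(x))$ are denoted by an overbar. Every coset of $R/(\varphi(x))$ contains a unique polynomial of degree less than $n$, and members of the same coset take the same values at the roots of $\varphi$. *)

theory Defs
  imports "HOL-Computational_Algebra.Polynomial" "HOL-Computational_Algebra.Fraction_Field"
begin

definition ratR :: "complex poly \<Rightarrow> complex poly fract set" where
  "ratR \<phi> = {Fract p q | p q. q \<noteq> 0 \<and> (\<forall>x. poly \<phi> x = 0 \<longrightarrow> poly q x \<noteq> 0)}"

definition phi_ideal :: "complex poly \<Rightarrow> complex poly fract set" where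
  "phi_ideal \<phi> = {Fract \<phi> 1 * g | g. g \<in> ratR \<phi>}"

definition same_coset :: "complex poly \<Rightarrow> complex poly fract \<Rightarrow> complex poly fract \<Rightarrow> bool" where
  "same_coset \<phi> f g \<longleftrightarrow> f - g \<in> phi_ideal \<phi>"

text \<open>The numbers b_{j,k}, j = -1,...,n-1 (as an int), k a nat; n = degree phi,
  a_i = coeff phi i.\<close>
fun bjk :: "complex poly \<Rightarrow> int \<Rightarrow> nat \<Rightarrow> complex" where
  "bjk \<phi> j 0 = (if j < 0 then 0 else of_int (j + 1) * coeff \<phi> (nat (j + 1)))"
| "bjk \<phi> j (Suc k) = (if j < 0 then 0 else
      - (coeff \<phi> (nat j) / lead_coeff \<phi>) * bjk \<phi> (int (degree \<phi>) - 1) k + bjk \<phi> (j - 1) k)"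

end

theory Submission
  imports Defs
begin

lemma bjk_neg: "j < 0 \<Longrightarrow> bjk \<phi> j k = 0"
  by (cases k) auto

fun Bp :: "complex poly \<Rightarrow> nat \<Rightarrow> complex poly" where
  "Bp \<phi> 0 = pderiv \<phi>"
| "Bp \<phi> (Suc k) = pCons 0 (Bp \<phi> k) - smult (coeff (Bp \<phi> k) (degree \<phi> - 1) / lead_coeff \<phi>) \<phi>"

lemma Bp_props:
  assumes "\<phi> \<noteq> 0" "degree \<phi> > 0"
  shows "degree (Bp \<phi> k) < degree \<phi> \<and> \<phi> dvd (pderiv \<phi> * monom 1 k - Bp \<phi> k)
         \<and> (\<forall>j<degree \<phi>. coeff (Bp \<phi> k) j = bjk \<phi> (int j) k)"
proof (induction k)
  case 0
  have "degree (pderiv \<phi>) < degree \<phi>" using assms by (simp add: degree_pderiv)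
  moreover have "\<forall>j<degree \<phi>. coeff (pderiv \<phi>) j = bjk \<phi> (int j) 0"
    by (simp add: coeff_pderiv nat_add_distrib)
  ultimately show ?case by simp
next
  case (Suc k)
  let ?n = "degree \<phi>"
  let ?B = "Bp \<phi> k"
  let ?c = "coeff ?B (?n - 1) / lead_coeff \<phi>"
  have lc: "lead_coeff \<phi> \<noteq> 0" using assms by simp
  have IH1: "degree ?B < ?n" and IH2: "\<phi> dvd (pderiv \<phi> * monom 1 k - ?B)"
    and IH3: "\<forall>j<?n. coeff ?B j = bjk \<phi> (int j) k" using Suc by auto
  have cf: "coeff (Bp \<phi> (Suc k)) m = coeff (pCons 0 ?B) m - ?c * coeff \<phi> m" for m
    by simp
  have "\<forall>m>?n - 1. coeff (Bp \<phi> (Suc k)) m = 0"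
  proof (intro allI impI)
    fix m assume m: "m > ?n - 1"
    show "coeff (Bp \<phi> (Suc k)) m = 0"
    proof (cases "m = ?n")
      case True
      obtain n' where "?n = Suc n'" using assms(2) by (cases "?n") auto
      then show ?thesis using True lc by simp
    next
      case False
      then have "m > ?n" using m by simp
      then show ?thesis using IH1 by (cases m) (auto simp: coeff_eq_0)
    qed
  qed
  then have "degree (Bp \<phi> (Suc k)) \<le> ?n - 1" by (rule degree_le)
  then have D: "degree (Bp \<phi> (Suc k)) < ?n" using assms by simp
  have eq: "pderiv \<phi> * monom 1 (Suc k) - Bp \<phi> (Suc k)
        = pCons 0 (pderiv \<phi> * monom 1 k - ?B) + smult ?c \<phi>"
  proof -
    have m: "pderiv \<phi> * monom 1 (Suc k) = pCons 0 (pderiv \<phi> * monom 1 k)"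
      by (simp only: monom_Suc mult_pCons_right smult_0_left add_0_left)
    have d: "pCons 0 (pderiv \<phi> * monom 1 k - ?B) = pCons 0 (pderiv \<phi> * monom 1 k) - pCons 0 ?B"
      by (simp only: diff_pCons diff_zero)
    show ?thesis unfolding m d Bp.simps(2) by (simp only: diff_diff_eq2 diff_add_cancel add_diff_eq) (rule diff_add_eq[symmetric])
  qed
  have pc: "\<phi> dvd pCons 0 (pderiv \<phi> * monom 1 k - ?B)"
  proof -
    obtain t where t: "pderiv \<phi> * monom 1 k - ?B = \<phi> * t" using IH2 by blast
    have "pCons 0 (\<phi> * t) = \<phi> * pCons 0 t" by (simp only: mult_pCons_right smult_0_left add_0_left)
    then show ?thesis unfolding t by (rule dvdI)
  qed
  have V: "\<phi> dvd (pderiv \<phi> * monom 1 (Suc k) - Bp \<phi> (Suc k))"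
    unfolding eq by (rule dvd_add[OF pc dvd_smult[OF dvd_refl]])
  have C: "\<forall>j<?n. coeff (Bp \<phi> (Suc k)) j = bjk \<phi> (int j) (Suc k)"
  proof (intro allI impI)
    fix j assume j: "j < ?n"
    have b: "bjk \<phi> (int j) (Suc k) = - (coeff \<phi> j / lead_coeff \<phi>) * bjk \<phi> (int ?n - 1) k + bjk \<phi> (int j - 1) k"
      by simp
    have bn: "bjk \<phi> (int ?n - 1) k = coeff ?B (?n - 1)"
    proof -
      have "int ?n - 1 = int (?n - 1)" using assms(2) by simp
      moreover have "?n - 1 < ?n" using assms(2) by simp
      ultimately show ?thesis using IH3 by simp
    qed
    show "coeff (Bp \<phi> (Suc k)) j = bjk \<phi> (int j) (Suc k)"
    proof (cases j)
      case 0
      then show ?thesis unfolding b bn cf by (simp add: bjk_neg)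
    next
      case (Suc j')
      then have "int j - 1 = int j'" by simp
      then have b2: "bjk \<phi> (int j - 1) k = coeff ?B j'" using IH3 Suc j by simp
      have "coeff (Bp \<phi> (Suc k)) j = coeff ?B j' - ?c * coeff \<phi> j" unfolding cf Suc by simp
      then show ?thesis unfolding b b2 bn by simp
    qed
  qed
  show ?case using D V C by blast
qed

theorem proposition1:
  fixes \<phi> hs r :: "complex poly" and h :: "complex poly fract"
  defines "n \<equiv> degree \<phi>"
  assumes "\<phi> \<noteq> 0"
    and "card {x. poly \<phi> x = 0} = n"
    and "h \<in> ratR \<phi>"
    and "degree hs < n" and "same_coset \<phi> (Fract hs 1) h"
    and "degree r < n" and "same_coset \<phi> (Fract r 1) (Fract (pderiv \<phi>) 1 * h)"
  shows "\<forall>i\<in>{1..n}. coeff r (n - i) = (\<Sum>k<n. coeff hs k * bjk \<phi> (int n - int i) k)"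
proof -
  have n0: "n > 0" using assms(5) by simp
  obtain c d where hcd: "h = Fract c d" "d \<noteq> 0" "\<And>x. poly \<phi> x = 0 \<Longrightarrow> poly d x \<noteq> 0"
    using assms(4) unfolding ratR_def by blast
  obtain a b where g1: "Fract hs 1 - h = Fract \<phi> 1 * Fract a b" "b \<noteq> 0"
      "\<And>x. poly \<phi> x = 0 \<Longrightarrow> poly b x \<noteq> 0"
    using assms(6) unfolding same_coset_def phi_ideal_def ratR_def by blast
  obtain a' b' where g2: "Fract r 1 - Fract (pderiv \<phi>) 1 * h = Fract \<phi> 1 * Fract a' b'" "b' \<noteq> 0"
      "\<And>x. poly \<phi> x = 0 \<Longrightarrow> poly b' x \<noteq> 0"
    using assms(8) unfolding same_coset_def phi_ideal_def ratR_def by blast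
  have e1: "(hs * d - c) * b = \<phi> * a * d"
    using g1 hcd by (simp add: eq_fract)
  have e2: "(r * d - pderiv \<phi> * c) * b' = \<phi> * a' * d"
    using g2 hcd by (simp add: eq_fract)
  have root: "poly r x = poly (pderiv \<phi> * hs) x" if "poly \<phi> x = 0" for x
  proof -
    have "(poly hs x * poly d x - poly c x) * poly b x = 0"
      using arg_cong[OF e1, of "\<lambda>p. poly p x"] that by simp
    then have 1: "poly hs x * poly d x = poly c x" using g1(3) that by simp
    have "(poly r x * poly d x - poly (pderiv \<phi>) x * poly c x) * poly b' x = 0"
      using arg_cong[OF e2, of "\<lambda>p. poly p x"] that by simp
    then have "poly r x * poly d x = poly (pderiv \<phi>) x * poly c x" using g2(3) that by simp
    then have "poly r x * poly d x = poly (pderiv \<phi>) x * poly hs x * poly d x"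
      using 1 by (simp add: mult.assoc)
    then show ?thesis using hcd(3) that by simp
  qed
  define s where "s = (\<Sum>k<n. smult (coeff hs k) (Bp \<phi> k))"
  have BP: "\<And>k. degree (Bp \<phi> k) < n \<and> \<phi> dvd (pderiv \<phi> * monom 1 k - Bp \<phi> k)
         \<and> (\<forall>j<n. coeff (Bp \<phi> k) j = bjk \<phi> (int j) k)"
    using Bp_props[OF assms(2)] n0 unfolding n_def by blast
  have degs: "degree s < n"
  proof -
    have "\<forall>m>n-1. coeff s m = 0"
    proof (intro allI impI)
      fix m assume "m > n - 1"
      then have "coeff (Bp \<phi> k) m = 0" for k using BP[of k] by (intro coeff_eq_0) linarith
      then show "coeff s m = 0" unfolding s_def by (simp add: coeff_sum)
    qed
    then have "degree s \<le> n - 1" by (rule degree_le)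
    then show ?thesis using n0 by simp
  qed
  have hs_sum: "hs = (\<Sum>k<n. monom (coeff hs k) k)"
  proof -
    have "(\<Sum>i\<le>n-1. monom (coeff hs i) i) = hs"
      by (rule poly_as_sum_of_monoms') (use assms(5) in simp)
    moreover have "{..n-1} = {..<n}" using n0 by auto
    ultimately show ?thesis by (metis dvd_triv_left)
  qed
  have "pderiv \<phi> * hs - s = (\<Sum>k<n. smult (coeff hs k) (pderiv \<phi> * monom 1 k - Bp \<phi> k))"
  proof -
    have "pderiv \<phi> * hs = (\<Sum>k<n. smult (coeff hs k) (pderiv \<phi> * monom 1 k))"
      by (subst hs_sum) (simp add: sum_distrib_left smult_monom flip: mult_smult_right)
    also have "\<dots> = (\<Sum>k<n. smult (coeff hs k) (Bp \<phi> k) + smult (coeff hs k) (pderiv \<phi> * monom 1 k - Bp \<phi> k))"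
      by (intro sum.cong refl) (simp only: smult_add_right[symmetric], rule arg_cong[where f="smult _"], metis add.commute diff_add_cancel)
    finally show ?thesis unfolding s_def by (simp add: sum.distrib)
  qed
  then have dv: "\<phi> dvd pderiv \<phi> * hs - s"
    using BP by (simp add: dvd_sum dvd_smult)
  have "r = s"
  proof (rule poly_eqI_degree[of "{x. poly \<phi> x = 0}"])
    fix x assume x: "x \<in> {x. poly \<phi> x = 0}"
    obtain q where q: "pderiv \<phi> * hs - s = \<phi> * q" using dv by blast
    have px: "poly \<phi> x = 0" using x by simp
    have "poly (pderiv \<phi> * hs - s) x = 0" unfolding q poly_mult px by simp
    then have "poly (pderiv \<phi> * hs) x = poly s x" by simp
    then show "poly r x = poly s x" using root[OF px] by simp
  next
    show "degree r < card {x. poly \<phi> x = 0}" using assms(3,7) by simp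
  next
    show "degree s < card {x. poly \<phi> x = 0}" using assms(3) degs by simp
  qed
  show ?thesis
  proof
    fix i assume i: "i \<in> {1..n}"
    have "coeff r (n - i) = (\<Sum>k<n. coeff hs k * coeff (Bp \<phi> k) (n - i))"
      unfolding \<open>r = s\<close> s_def by (simp add: coeff_sum)
    also have "\<dots> = (\<Sum>k<n. coeff hs k * bjk \<phi> (int n - int i) k)"
      using BP i by (intro sum.cong) (auto simp: of_nat_diff)
    finally show "coeff r (n - i) = (\<Sum>k<n. coeff hs k * bjk \<phi> (int n - int i) k)" .
  qed
qed

end
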